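(* Let $b>0$, $d\in\mathbb{N}^*$, and let $(G_n)_{n\ge0}$, $G_n=(V_n,E_n)$, be a $(b,d)$-expander. Let $\gamma\in[0,1[$ and $\varepsilon\in\,]0,1[$. Then there is some $c<1$ such that, for $|V_n|$ large enough, \[ \mu_{n,\gamma}\big(L_n^{(1)}\geq c|V_n|\big)\leq \varepsilon. \]
   Context: For a finite graph $G=(V,E)$, $E(A,B)$ is the set of edges with one endpoint in $A$ and the other in $B$, and the Cheeger constant is $c(G)=\min_{A\subset V,\,0<|A|\le |V|/2} |E(A,A^c)|/|A|$. A $(b,d)$-expander is a sequence of finite graphs $G_n=(V_n,E_n)$ such that for every $n$ the maximal degree of $G_n$ is at most $d$ and $c(G_n)>b$, with $|V_n|\to\infty$. Configurations $x\in\{0,1\}^{E_n}$ are identified with the spanning subgraph of $G_n$ keeping exactly the edges $e$ with $x(e)=1$; $\mu_{n,p}$ is the product measure on $\{0,1\}^{E_n}$ under which each $x(e)$ is independently $1$ with probability $p$ and $0$ otherwise. $L_n^{(1)}(x)$ is the number of vertices of the largest connected component of $x$. *)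

theory Defs
  imports "HOL-Probability.Probability"
begin

definition finite_graph :: "'a set \<Rightarrow> 'a set set \<Rightarrow> bool" where
  "finite_graph V E \<longleftrightarrow> finite V \<and> (\<forall>e\<in>E. e \<subseteq> V \<and> card e = 2)"

definition degree :: "'a set set \<Rightarrow> 'a \<Rightarrow> nat" where
  "degree E v = card {e\<in>E. v \<in> e}"

definition max_degree_le :: "'a set \<Rightarrow> 'a set set \<Rightarrow> nat \<Rightarrow> bool" where
  "max_degree_le V E d \<longleftrightarrow> (\<forall>v\<in>V. degree E v \<le> d)"

definition edges_between :: "'a set set \<Rightarrow> 'a set \<Rightarrow> 'a set \<Rightarrow> 'a set set" where
  "edges_between E A B = {e\<in>E. \<exists>u v. e = {u, v} \<and> u \<in> A \<and> v \<in> B}"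

definition cheeger_const :: "'a set \<Rightarrow> 'a set set \<Rightarrow> real" where
  "cheeger_const V E = Min {real (card (edges_between E A (V - A))) / real (card A) | A.
      A \<subseteq> V \<and> 0 < card A \<and> real (card A) \<le> real (card V) / 2}"

definition expander :: "real \<Rightarrow> nat \<Rightarrow> (nat \<Rightarrow> 'a set) \<Rightarrow> (nat \<Rightarrow> 'a set set) \<Rightarrow> bool" where
  "expander b d V E \<longleftrightarrow>
     (\<forall>n. finite_graph (V n) (E n) \<and> max_degree_le (V n) (E n) d \<and> cheeger_const (V n) (E n) > b)
     \<and> filterlim (\<lambda>n. card (V n)) at_top sequentially"

text \<open>Product Bernoulli(p) measure on configurations x : E \<rightarrow> {0,1} (True = 1).\<close>
definition perc_measure :: "'a set set \<Rightarrow> real \<Rightarrow> ('a set \<Rightarrow> bool) pmf" where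
  "perc_measure E p = Pi_pmf E False (\<lambda>_. bernoulli_pmf p)"

definition component :: "'a set \<Rightarrow> 'a set set \<Rightarrow> 'a \<Rightarrow> 'a set" where
  "component V F v = {w\<in>V. (v, w) \<in> {(a, c). {a, c} \<in> F}\<^sup>*}"

definition largest_component :: "'a set \<Rightarrow> 'a set set \<Rightarrow> ('a set \<Rightarrow> bool) \<Rightarrow> nat" where
  "largest_component V E x = Max ((\<lambda>v. card (component V {e\<in>E. x e} v)) ` V)"

end

theory Submission imports Defs begin

lemma indep_exists:
  fixes V :: "'a set" and E :: "'a set set"
  assumes "finite V" "finite E" "\<forall>v\<in>V. degree E v \<le> d" "\<forall>e\<in>E. card e = 2"
  shows "\<exists>S\<subseteq>V. (\<forall>u\<in>S. \<forall>v\<in>S. u \<noteq> v \<longrightarrow> {u,v} \<notin> E) \<and> card V \<le> (d+1) * card S"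
  using assms(1,3)
proof (induction "card V" arbitrary: V rule: less_induct)
  case less
  show ?case
  proof (cases "V = {}")
    case True then show ?thesis by auto
  next
    case False
    then obtain v where v: "v \<in> V" by blast
    define N where "N = {w. {v,w} \<in> E}"
    have fU: "finite (\<Union>E)" using assms(2,4) by (metis card.infinite finite_Union zero_neq_numeral)
    have finN: "finite N"
      by (rule finite_subset[OF _ fU]) (auto simp: N_def)
    have cN: "card N \<le> d"
    proof -
      have vN: "v \<notin> N" using assms(4) by (auto simp: N_def)
      have inj: "inj_on (\<lambda>w. {v,w}) N"
        using vN unfolding inj_on_def by (auto simp: doubleton_eq_iff)
      have "(\<lambda>w. {v,w}) ` N \<subseteq> {e\<in>E. v\<in>e}" by (auto simp: N_def)
      hence "card N \<le> card {e\<in>E. v\<in>e}"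
        using card_inj_on_le[OF inj] assms(2) by auto
      thus ?thesis using less.prems v unfolding degree_def by force
    qed
    define V' where "V' = V - insert v N"
    have lt: "card V' < card V" unfolding V'_def
      using v less.prems(1) by (intro psubset_card_mono) auto
    obtain S' where S': "S' \<subseteq> V'" "\<forall>u\<in>S'. \<forall>w\<in>S'. u \<noteq> w \<longrightarrow> {u,w} \<notin> E"
        "card V' \<le> (d+1) * card S'"
      using less.hyps[OF lt] less.prems unfolding V'_def by auto
    have vS': "v \<notin> S'" using S'(1) V'_def by auto
    have finS': "finite S'" using S'(1) less.prems(1) V'_def finite_subset by blast
    have "card V \<le> card (V' \<union> insert v N)"
      using less.prems(1) finN by (intro card_mono) (auto simp: V'_def)
    also have "\<dots> \<le> card V' + card (insert v N)" by (rule card_Un_le)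
    also have "\<dots> \<le> card V' + (d + 1)" using cN finN by (simp add: card_insert_if)
    finally have "card V \<le> (d+1) * card (insert v S')"
      using S'(3) vS' finS' by simp
    moreover have "insert v S' \<subseteq> V" using v S'(1) V'_def by auto
    moreover have "\<forall>u\<in>insert v S'. \<forall>w\<in>insert v S'. u \<noteq> w \<longrightarrow> {u,w} \<notin> E"
    proof -
      have "\<forall>w\<in>S'. {v,w} \<notin> E" using S'(1) by (auto simp: V'_def N_def)
      thus ?thesis using S'(2) by (auto simp: insert_commute)
    qed
    ultimately show ?thesis by blast
  qed
qed

lemma prob_closed:
  assumes "finite E" "A \<subseteq> E" "0 \<le> p" "p \<le> 1"
  shows "measure_pmf.prob (perc_measure E p) {x. \<forall>e\<in>A. \<not> x e} = (1-p)^card A"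
proof -
  have eq: "{x. \<forall>e\<in>A. \<not> x e} = Pi E (\<lambda>e. if e\<in>A then {False} else UNIV)"
    using assms(2) by (auto simp: Pi_def)
  have "measure_pmf.prob (perc_measure E p) {x. \<forall>e\<in>A. \<not> x e} =
     (\<Prod>e\<in>E. measure_pmf.prob (bernoulli_pmf p) (if e\<in>A then {False} else UNIV))"
    unfolding perc_measure_def eq by (rule measure_Pi_pmf_Pi) fact
  also have "\<dots> = (\<Prod>e\<in>E. if e\<in>A then 1-p else 1)"
    using assms by (intro prod.cong) (auto simp: measure_pmf_single)
  also have "\<dots> = (1-p)^card A"
    using assms(1,2) by (simp add: prod.If_cases Int_absorb1)
  finally show ?thesis .
qed

lemma isolated_component:
  assumes iso: "\<forall>e\<in>E. u \<in> e \<longrightarrow> \<not> x e"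
  shows "component V {e\<in>E. x e} u \<subseteq> {u}" and "w \<noteq> u \<Longrightarrow> u \<notin> component V {e\<in>E. x e} w"
proof -
  let ?R = "{(a, c). {a, c} \<in> {e\<in>E. x e}}"
  show "component V {e\<in>E. x e} u \<subseteq> {u}"
  proof
    fix z assume "z \<in> component V {e\<in>E. x e} u"
    hence "(u,z) \<in> ?R\<^sup>*" by (simp add: component_def)
    thus "z \<in> {u}"
      using iso by (cases rule: converse_rtranclE) auto
  qed
  assume wu: "w \<noteq> u"
  show "u \<notin> component V {e\<in>E. x e} w"
  proof
    assume "u \<in> component V {e\<in>E. x e} w"
    hence "(w,u) \<in> ?R\<^sup>*" by (simp add: component_def)
    thus False
      using iso wu by (cases rule: rtranclE) auto
  qed
qed


lemma single:
  fixes V :: "'a set" and E :: "'a set set" and \<gamma> :: real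
  assumes fg: "finite_graph V E" and md: "max_degree_le V E d" and g: "0 \<le> \<gamma>" "\<gamma> < 1"
   and cV: "card V \<ge> 3"
  shows "measure_pmf.prob (perc_measure E \<gamma>)
     {x. real (largest_component V E x) \<ge> (1 - (1-\<gamma>)^d/(2*(real d+1))) * real (card V)}
      \<le> 4*(real d+1)/(((1-\<gamma>)^d)^2 * card V)"
proof -
  define q where "q = (1-\<gamma>)^d"
  define c where "c = 1 - q/(2*(real d+1))"
  define M where "M = perc_measure E \<gamma>"
  have finV: "finite V" and Esub: "\<forall>e\<in>E. e \<subseteq> V" and E2: "\<forall>e\<in>E. card e = 2"
    using fg by (auto simp: finite_graph_def)
  have finE: "finite E" using finV Esub by (metis Pow_iff finite_Pow_iff finite_subset subsetI)
  have deg: "\<forall>v\<in>V. degree E v \<le> d" using md by (simp add: max_degree_le_def)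
  obtain S where S: "S \<subseteq> V" "\<forall>u\<in>S. \<forall>v\<in>S. u \<noteq> v \<longrightarrow> {u,v} \<notin> E"
      "card V \<le> (d+1) * card S"
    using indep_exists[OF finV finE deg E2] by blast
  define m where "m = card S"
  have finS: "finite S" using S(1) finV finite_subset by blast
  have mV: "real (card V) \<le> (real d+1) * m" using S(3) unfolding m_def by (metis of_nat_le_iff of_nat_mult of_nat_1 of_nat_add)
  have mpos: "m > 0" using S(3) cV unfolding m_def by (cases "card S") auto
  have q0: "0 < q" and q1: "q \<le> 1" using g by (auto simp: q_def power_le_one)
  define st where "st u = {e\<in>E. u \<in> e}" for u
  define A where "A u = {x. \<forall>e\<in>st u. \<not> x e}" for u
  define p where "p u = (1-\<gamma>)^degree E u" for u
  have pA: "measure_pmf.prob M (A u) = p u" for u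
    unfolding M_def A_def p_def degree_def st_def
    by (rule prob_closed) (use finE g in auto)
  have pq: "q \<le> p u" if "u \<in> S" for u
    unfolding p_def q_def using deg S(1) that g
    by (intro power_decreasing) auto
  have p1: "p u \<le> 1" for u unfolding p_def using g by (simp add: power_le_one)
  have pAA: "measure_pmf.prob M (A u \<inter> A v) = p u * p v" if "u \<in> S" "v \<in> S" "u \<noteq> v" for u v
  proof -
    have disj: "st u \<inter> st v = {}"
    proof (rule ccontr)
      assume "st u \<inter> st v \<noteq> {}"
      then obtain e where e: "e \<in> E" "u \<in> e" "v \<in> e" by (auto simp: st_def)
      hence "e = {u,v}" using E2 that(3) by (metis card_2_iff doubleton_eq_iff insertE singletonD)
      thus False using S(2) that e by auto
    qed
    have "A u \<inter> A v = {x. \<forall>e\<in>st u \<union> st v. \<not> x e}" by (auto simp: A_def)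
    hence "measure_pmf.prob M (A u \<inter> A v) = (1-\<gamma>)^card (st u \<union> st v)"
      unfolding M_def using finE g by (simp add: prob_closed st_def)
    also have "\<dots> = p u * p v"
    proof -
      have "finite (st u)" "finite (st v)" using finE by (auto simp: st_def)
      thus ?thesis using disj
        by (simp add: card_Un_disjoint p_def degree_def st_def[symmetric] power_add)
    qed
    finally show ?thesis .
  qed
  define Y where "Y x = (\<Sum>u\<in>S. indicator (A u) x :: real)" for x
  define \<mu> where "\<mu> = (\<Sum>u\<in>S. p u)"
  have intI: "integrable M (indicator B :: _ \<Rightarrow> real)" for B
    by (simp add: measure_pmf.emeasure_eq_measure)
  have intY: "integrable M Y" unfolding Y_def by (intro Bochner_Integration.integrable_sum intI)
  have Y2: "(\<lambda>x. (Y x)^2) = (\<lambda>x. \<Sum>u\<in>S. \<Sum>v\<in>S. indicator (A u \<inter> A v) x)"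
    by (auto simp: Y_def power2_eq_square sum_product indicator_inter_arith)
  have intY2: "integrable M (\<lambda>x. (Y x)^2)" unfolding Y2 by (intro Bochner_Integration.integrable_sum intI)
  have EY: "measure_pmf.expectation M Y = \<mu>"
    unfolding Y_def \<mu>_def by (subst Bochner_Integration.integral_sum) (auto simp: intI pA)
  have EY2: "measure_pmf.expectation M (\<lambda>x. (Y x)^2) = (\<Sum>u\<in>S. \<Sum>v\<in>S. p u * p v + (if u = v then p u - (p u)^2 else 0))"
    unfolding Y2 
    apply (subst Bochner_Integration.integral_sum, simp add: intI Bochner_Integration.integrable_sum)
    apply (intro sum.cong refl)
    apply (subst Bochner_Integration.integral_sum, simp add: intI)
    apply (intro sum.cong refl)
    using pA pAA by (auto simp: power2_eq_square)
  have var: "measure_pmf.variance M Y \<le> m"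
  proof -
    have "measure_pmf.variance M Y = (\<Sum>u\<in>S. p u - (p u)^2)"
      using measure_pmf.variance_eq[OF intY intY2] EY EY2 finS
      by (simp add: sum.distrib sum_product[symmetric] \<mu>_def power2_eq_square)
    also have "\<dots> \<le> (\<Sum>u\<in>S. 1)" using p1 pA 
      by (intro sum_mono) (metis diff_le_eq le_add_same_cancel1 measure_nonneg zero_le_power2 order_trans)
    finally show ?thesis by (simp add: m_def)
  qed
  have mu: "q * m \<le> \<mu>" unfolding \<mu>_def m_def
    using sum_mono[of S "\<lambda>_. q" p] pq by (simp add: mult.commute)
  have mupos: "\<mu> > 0" using mu q0 mpos by (smt (verit) mult_pos_pos of_nat_0_less_iff)
  have sub: "{x. real (largest_component V E x) \<ge> c * real (card V)} \<subseteq> {x \<in> space M. \<bar>Y x - \<mu>\<bar> \<ge> \<mu>/2}"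
  proof safe
    fix x assume L: "c * real (card V) \<le> real (largest_component V E x)"
    define F where "F = {e\<in>E. x e}"
    have Vne: "V \<noteq> {}" using cV by auto
    obtain w where w: "w \<in> V" "largest_component V E x = card (component V F w)"
    proof -
      have "Max ((\<lambda>v. card (component V F v)) ` V) \<in> (\<lambda>v. card (component V F v)) ` V"
        using finV Vne by (intro Max_in) auto
      thus ?thesis using that unfolding largest_component_def F_def by auto
    qed
    define C where "C = component V F w"
    define I where "I = {u\<in>S. x \<in> A u}"
    have "q/(2*(real d+1)) \<le> 1/2" using q1 by (intro frac_le) auto
    hence c2: "c \<ge> 1/2" unfolding c_def by linarith
    have cV3: "real (card V) \<ge> 3" using cV by simp
    have "c * real (card V) \<ge> 1/2 * real (card V)" using c2 by (intro mult_right_mono) auto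
    hence "real (card C) \<ge> 3/2" using L w cV3 unfolding C_def by linarith
    hence C2: "card C \<ge> 2" by linarith
    have disj: "C \<inter> I = {}"
    proof (rule ccontr)
      assume "C \<inter> I \<noteq> {}"
      then obtain u where u: "u \<in> C" "u \<in> S" "x \<in> A u" by (auto simp: I_def)
      have iso: "\<forall>e\<in>E. u \<in> e \<longrightarrow> \<not> x e" using u(3) by (auto simp: A_def st_def)
      show False
      proof (cases "w = u")
        case True
        hence "C \<subseteq> {u}" using isolated_component(1)[OF iso, of V] by (simp add: C_def F_def)
        hence "card C \<le> 1" using card_mono[of "{u}" C] by simp
        thus False using C2 by simp
      next
        case False
        thus False using isolated_component(2)[OF iso, of w V] u(1) by (simp add: C_def F_def)
      qed
    qed
    have CV: "C \<subseteq> V" by (auto simp: C_def component_def)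
    have IV: "I \<subseteq> V" using S(1) by (auto simp: I_def)
    have "card C + card I = card (C \<union> I)" using disj finV CV IV
      by (metis card_Un_disjoint finite_subset)
    also have "\<dots> \<le> card V" using CV IV finV by (intro card_mono) auto
    finally have CI: "card C + card I \<le> card V" .
    have YI: "Y x = card I" unfolding Y_def I_def
      using finS by (simp add: indicator_def sum.If_cases Int_def)
    have "Y x \<le> real (card V) - c * real (card V)" using YI CI L w C_def
      by (smt (verit) of_nat_add of_nat_le_iff)
    also have "\<dots> = q * card V / (2*(real d+1))" by (simp add: c_def field_simps)
    also have "\<dots> \<le> q * ((real d+1)*m) / (2*(real d+1))" using mV q0
      by (intro divide_right_mono mult_left_mono) auto
    also have "\<dots> = q*m/2" by (simp add: field_simps)
    also have "\<dots> \<le> \<mu>/2" using mu by simp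
    finally have "Y x \<le> \<mu>/2" .
    thus "\<mu>/2 \<le> \<bar>Y x - \<mu>\<bar>" by linarith
  qed simp
  have "measure_pmf.prob M {x. real (largest_component V E x) \<ge> c * real (card V)}
        \<le> measure_pmf.prob M {x \<in> space M. \<bar>Y x - \<mu>\<bar> \<ge> \<mu>/2}"
    using sub by (intro measure_pmf.finite_measure_mono) auto
  also have "\<dots> \<le> measure_pmf.variance M Y / (\<mu>/2)^2"
    using measure_pmf.Chebyshev_inequality[OF _ intY2, of "\<mu>/2"] EY mupos by simp
  also have "\<dots> \<le> m / (q*m/2)^2"
    using var mu mupos q0 mpos
    by (intro frac_le power_mono) (auto intro: measure_pmf.variance_positive)
  also have "\<dots> = 4 / (q^2 * m)" using mpos by (simp add: field_simps power2_eq_square)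
  also have "\<dots> \<le> 4*(real d+1) / (q^2 * card V)"
    using mV q0 mpos cV by (simp add: field_simps power2_eq_square)
  finally show ?thesis unfolding M_def c_def q_def .
qed


theorem lemma4p5:
  fixes b :: real and d :: nat and V :: "nat \<Rightarrow> 'a set" and E :: "nat \<Rightarrow> 'a set set"
    and \<gamma> \<epsilon> :: real
  assumes "b > 0" and "d \<ge> 1" and "expander b d V E"
    and "0 \<le> \<gamma>" and "\<gamma> < 1" and "0 < \<epsilon>" and "\<epsilon> < 1"
  shows "\<exists>c::real. c < 1 \<and> (\<exists>N. \<forall>n. card (V n) \<ge> N \<longrightarrow>
           measure_pmf.prob (perc_measure (E n) \<gamma>)
             {x. real (largest_component (V n) (E n) x) \<ge> c * real (card (V n))} \<le> \<epsilon>)"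
proof -
  define q where "q = (1-\<gamma>)^d"
  have q0: "q > 0" using assms by (simp add: q_def)
  define K where "K = 4*(real d+1)/(q^2 * \<epsilon>)"
  define N where "N = max 3 (nat \<lceil>K\<rceil>)"
  have "1 - q/(2*(real d+1)) < 1" using q0 by simp
  moreover have "\<forall>n. card (V n) \<ge> N \<longrightarrow>
           measure_pmf.prob (perc_measure (E n) \<gamma>)
             {x. real (largest_component (V n) (E n) x) \<ge> (1 - q/(2*(real d+1))) * real (card (V n))} \<le> \<epsilon>"
  proof (intro allI impI)
    fix n assume nN: "card (V n) \<ge> N"
    have fg: "finite_graph (V n) (E n)" and md: "max_degree_le (V n) (E n) d"
      using assms(3) by (auto simp: expander_def)
    have c3: "card (V n) \<ge> 3" using nN by (simp add: N_def)
    have "K \<le> real (nat \<lceil>K\<rceil>)" by (rule real_nat_ceiling_ge)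
    moreover have "nat \<lceil>K\<rceil> \<le> card (V n)" using nN unfolding N_def by simp
    ultimately have KV: "K \<le> real (card (V n))" by (meson of_nat_le_iff order_trans)
    have "measure_pmf.prob (perc_measure (E n) \<gamma>)
             {x. real (largest_component (V n) (E n) x) \<ge> (1 - q/(2*(real d+1))) * real (card (V n))}
          \<le> 4*(real d+1)/(q^2 * card (V n))"
      unfolding q_def by (rule single[OF fg md assms(4,5) c3])
    also have "\<dots> \<le> \<epsilon>"
    proof -
      have pos: "q^2 * card (V n) > 0" using q0 c3 by simp
      have qe: "q^2 * \<epsilon> > 0" using q0 assms(6) by simp
      have "4*(real d+1) \<le> real (card (V n)) * (q^2 * \<epsilon>)"
        using KV qe unfolding K_def by (simp add: pos_divide_le_eq)
      hence "4*(real d+1) \<le> \<epsilon> * (q^2 * card (V n))" by (simp add: ac_simps)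
      thus ?thesis using pos by (simp add: divide_le_eq)
    qed
    finally show "measure_pmf.prob (perc_measure (E n) \<gamma>)
             {x. real (largest_component (V n) (E n) x) \<ge> (1 - q/(2*(real d+1))) * real (card (V n))} \<le> \<epsilon>" .
  qed
  ultimately show ?thesis by blast
qed

end
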